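(* Let $\epsilon>0$ and let $A\in\mathbb{R}^{n\times d}$ have all rows in the Euclidean unit ball $\mathbb{B}$. Run the Sublinear Perceptron (described in the context), and let $i_1,\dots,i_T$ be the indices it samples. Then the vector $\bar p=\frac1T\sum_{t}e_{i_t}\in\mathbb{R}^n$ is, with probability at least $1/2$, an $O(\epsilon)$-approximate dual solution, i.e. $\max_{x\in\mathbb{B}}\bar p^\top Ax\le\sigma+O(\epsilon)$ where $\sigma=\max_{x\in\mathbb{B}}\min_i A_ix=\min_{p\in\Delta}\max_{x\in\mathbb{B}}p^\top Ax$ and $\Delta$ is the unit simplex in $\mathbb{R}^n$.
   Context: $e_i$ is the $i$-th standard basis vector of $\mathbb{R}^n$. For $z,V\in\mathbb{R}$, $\mathrm{clip}(z,V)=\min\{V,\max\{-V,z\}\}$. Sublinear Perceptron: Input $\epsilon>0$ and $A$. Set $T=200^2\epsilon^{-2}\log n$, $y_1=0$, $w_1=\mathbf{1}_n$, $\eta=\frac{1}{100}\sqrt{\log n/T}$. For $t=1,\dots,T$: set $p_t=w_t/\|w_t\|_1$ and $x_t=y_t/\max\{1,\|y_t\|\}$; choose $i_t\in[n]$ with $\Pr[i_t=i]=p_t(i)$; set $y_{t+1}=y_t+\frac{1}{\sqrt{2T}}A_{i_t}$; choose $j_t\in[d]$ with $\Pr[j_t=j]=x_t(j)^2/\|x_t\|^2$; for each $i$ set $\tilde v_t(i)=A_i(j_t)\|x_t\|^2/x_t(j_t)$, $v_t(i)=\mathrm{clip}(\tilde v_t(i),1/\eta)$, and $w_{t+1}(i)=w_t(i)(1-\eta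 v_t(i)+\eta^2v_t(i)^2)$. Output $\bar x=\frac1T\sum_tx_t$. *)

theory Defs
  imports "HOL-Probability.Probability"
begin

text \<open>Vectors of R^d are functions nat => real, only components j < d matter.
  The matrix A is given by A i j = entry of row i (i < n), column j (j < d).\<close>

definition vnorm :: "nat \<Rightarrow> (nat \<Rightarrow> real) \<Rightarrow> real" where
  "vnorm d x = sqrt (\<Sum>j<d. (x j)^2)"

definition clip :: "real \<Rightarrow> real \<Rightarrow> real" where
  "clip z V = min V (max (- V) z)"

definition sp_T :: "nat \<Rightarrow> real \<Rightarrow> nat" where
  "sp_T n \<epsilon> = nat \<lceil>200^2 / \<epsilon>^2 * ln (real n)\<rceil>"

definition sp_eta :: "nat \<Rightarrow> real \<Rightarrow> real" where
  "sp_eta n \<epsilon> = 1/100 * sqrt (ln (real n) / real (sp_T n \<epsilon>))"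

text \<open>One iteration: from state (w_t, y_t) sample i_t and j_t, return i_t and (w_{t+1}, y_{t+1}).
  Convention: if x_t = 0 (e.g. t = 1), the distribution of j_t is undefined; then v_t = 0.\<close>
definition sp_step :: "nat \<Rightarrow> nat \<Rightarrow> (nat \<Rightarrow> nat \<Rightarrow> real) \<Rightarrow> real
    \<Rightarrow> (nat \<Rightarrow> real) \<times> (nat \<Rightarrow> real)
    \<Rightarrow> (nat \<times> ((nat \<Rightarrow> real) \<times> (nat \<Rightarrow> real))) pmf" where
  "sp_step n d A \<epsilon> s =
    (let w = fst s; y = snd s; T = sp_T n \<epsilon>; \<eta> = sp_eta n \<epsilon>;
         p = (\<lambda>i. w i / (\<Sum>k<n. w k));
         x = (\<lambda>j. y j / max 1 (vnorm d y))
     in bind_pmf (embed_pmf (\<lambda>i. if i < n then p i else 0)) (\<lambda>i.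
        bind_pmf (if vnorm d x = 0 then return_pmf 0
                  else embed_pmf (\<lambda>j. if j < d then (x j)^2 / (vnorm d x)^2 else 0)) (\<lambda>j.
        let v = (\<lambda>k. if vnorm d x = 0 then 0
                      else clip (A k j * (vnorm d x)^2 / x j) (1/\<eta>))
        in return_pmf (i, (\<lambda>k. w k * (1 - \<eta> * v k + \<eta>^2 * (v k)^2),
                           \<lambda>k. y k + 1 / sqrt (2 * real T) * A i k)))))"

fun sp_run :: "nat \<Rightarrow> nat \<Rightarrow> (nat \<Rightarrow> nat \<Rightarrow> real) \<Rightarrow> real \<Rightarrow> nat
    \<Rightarrow> (((nat \<Rightarrow> real) \<times> (nat \<Rightarrow> real)) \<times> nat list) pmf" where
  "sp_run n d A \<epsilon> 0 = return_pmf ((\<lambda>_. 1, \<lambda>_. 0), [])"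
| "sp_run n d A \<epsilon> (Suc t) =
     bind_pmf (sp_run n d A \<epsilon> t)
       (\<lambda>(s, is). map_pmf (\<lambda>(i, s'). (s', is @ [i])) (sp_step n d A \<epsilon> s))"

definition pbar :: "nat \<Rightarrow> nat list \<Rightarrow> nat \<Rightarrow> real" where
  "pbar T is i = real (count_list is i) / real T"

definition dual_val :: "nat \<Rightarrow> nat \<Rightarrow> (nat \<Rightarrow> nat \<Rightarrow> real) \<Rightarrow> (nat \<Rightarrow> real) \<Rightarrow> real" where
  "dual_val n d A p = Sup {(\<Sum>i<n. p i * (\<Sum>j<d. A i j * x j)) | x. vnorm d x \<le> 1}"

definition sigma :: "nat \<Rightarrow> nat \<Rightarrow> (nat \<Rightarrow> nat \<Rightarrow> real) \<Rightarrow> real" where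
  "sigma n d A = Sup {Min ((\<lambda>i. \<Sum>j<d. A i j * x j) ` {..<n}) | x. vnorm d x \<le> 1}"

end

theory Submission
  imports Defs
begin


definition dot :: "nat \<Rightarrow> (nat \<Rightarrow> real) \<Rightarrow> (nat \<Rightarrow> real) \<Rightarrow> real" where
  "dot d x y = (\<Sum>j<d. x j * y j)"

lemma vnorm_L2: "vnorm d x = L2_set x {..<d}"
  by (simp add: vnorm_def L2_set_def)

lemma vnorm_nonneg[simp]: "0 \<le> vnorm d x"
  by (simp add: vnorm_def sum_nonneg)

lemma vnorm_sq: "(vnorm d x)^2 = (\<Sum>j<d. (x j)^2)"
  by (simp add: vnorm_def sum_nonneg)

lemma dot_abs_le: "\<bar>dot d x y\<bar> \<le> vnorm d x * vnorm d y"
proof -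
  have "\<bar>dot d x y\<bar> \<le> (\<Sum>j<d. \<bar>x j\<bar> * \<bar>y j\<bar>)"
    unfolding dot_def by (rule order.trans[OF sum_abs]) (simp add: abs_mult)
  also have "\<dots> \<le> vnorm d x * vnorm d y"
    unfolding vnorm_L2 by (rule L2_set_mult_ineq)
  finally show ?thesis .
qed

lemma dot_le: "dot d x y \<le> vnorm d x * vnorm d y"
  using dot_abs_le[of d x y] by linarith

lemma vnorm_scale: "vnorm d (\<lambda>j. c * x j) = \<bar>c\<bar> * vnorm d x"
proof -
  have "(\<Sum>j<d. (c * x j)^2) = c^2 * (\<Sum>j<d. (x j)^2)"
    by (simp add: power_mult_distrib sum_distrib_left)
  thus ?thesis by (simp add: vnorm_def real_sqrt_mult)
qed

lemma vnorm_div: "vnorm d (\<lambda>j. x j / c) = vnorm d x / \<bar>c\<bar>"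
  using vnorm_scale[of d "1/c" x] by (simp add: divide_inverse mult.commute abs_inverse)

lemma vnorm_add: "vnorm d (\<lambda>j. x j + y j) \<le> vnorm d x + vnorm d y"
  unfolding vnorm_L2 by (rule L2_set_triangle_ineq)

lemma vnorm_zero_iff: "vnorm d x = 0 \<longleftrightarrow> (\<forall>j<d. x j = 0)"
  by (auto simp add: vnorm_def sum_nonneg_eq_0_iff)

definition Xv :: "nat \<Rightarrow> (nat \<Rightarrow> real) \<Rightarrow> nat \<Rightarrow> real" where
  "Xv d y = (\<lambda>j. y j / max 1 (vnorm d y))"

lemma vnorm_Xv: "vnorm d (Xv d y) \<le> 1"
proof -
  have "vnorm d (Xv d y) = vnorm d y / max 1 (vnorm d y)"
    unfolding Xv_def vnorm_div by simp
  also have "\<dots> \<le> 1" by (simp add: divide_le_eq)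
  finally show ?thesis .
qed

lemma exp_le_quad:
  fixes z :: real assumes "z \<le> 1" shows "exp z \<le> 1 + z + z^2"
proof (cases "z \<ge> 0")
  case True thus ?thesis using exp_bound assms by blast
next
  case False
  show ?thesis
  proof (cases "z \<ge> -1")
    case True
    have "1 - z \<le> exp (-z)" using exp_ge_add_one_self[of "-z"] by simp
    hence "exp z \<le> 1 / (1 - z)" using False
      by (simp add: exp_minus field_simps)
    also have "\<dots> \<le> 1 + z + z^2"
    proof -
      have e: "(1 - z) * (1 + z + z^2) = 1 - z * z^2"
        by (simp add: algebra_simps power2_eq_square)
      have "z * z^2 \<le> 0" using False by (simp add: mult_nonpos_nonneg)
      hence "1 \<le> (1 - z) * (1 + z + z^2)" unfolding e by simp
      thus ?thesis using False by (simp add: divide_le_eq mult.commute)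
    qed
    finally show ?thesis .
  next
    case F2: False
    have "exp z \<le> 1" using False by simp
    moreover have "0 \<le> z * (1 + z)" using F2 by (intro mult_nonpos_nonpos) auto
    hence "0 \<le> z + z^2" by (simp add: algebra_simps power2_eq_square)
    ultimately show ?thesis by linarith
  qed
qed

lemma clip_abs_le: "V > 0 \<Longrightarrow> \<bar>clip z V\<bar> \<le> V"
  by (simp add: clip_def)

lemma clip_abs_le2: "V > 0 \<Longrightarrow> \<bar>clip z V\<bar> \<le> \<bar>z\<bar>"
  by (simp add: clip_def)

lemma clip_err: assumes "V > 0" shows "\<bar>clip z V - z\<bar> \<le> z^2 / V"
proof (cases "\<bar>z\<bar> \<le> V")
  case True thus ?thesis using assms by (simp add: clip_def)
next
  case False
  hence "\<bar>clip z V - z\<bar> \<le> \<bar>z\<bar>" using assms by (auto simp: clip_def)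
  also have "\<bar>z\<bar> \<le> z^2 / V" using False assms
    by (simp add: le_divide_eq power2_eq_square) (metis abs_mult_self_eq abs_ge_zero less_le_not_le mult_left_mono nle_le)
  finally show ?thesis .
qed


definition phi :: "nat \<Rightarrow> (nat \<Rightarrow> real) \<Rightarrow> real" where
  "phi d y = dot d y (Xv d y) - (vnorm d (Xv d y))^2 / 2"

lemma dot_self: "dot d y y = (vnorm d y)^2"
proof -
  have "dot d y y = (\<Sum>j<d. (y j)^2)" by (simp add: dot_def power2_eq_square)
  thus ?thesis by (simp add: vnorm_sq)
qed

lemma pw_aux:
  fixes y h x q :: real
  shows "((y + h) * q - q^2/2) - (y * x - x^2/2) - h * x - h^2/2 \<le> (y - x) * (q - x)"
proof -
  have "((y + h) * q - q^2/2) - (y * x - x^2/2) - h * x - h^2/2 - (y - x) * (q - x)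
        = - ((h - (q - x))^2 / 2)"
    by (simp add: power2_eq_square field_simps)
  moreover have "0 \<le> (h - (q - x))^2" by simp
  ultimately show ?thesis by linarith
qed

lemma Xv_small: "vnorm d y \<le> 1 \<Longrightarrow> Xv d y = y"
  by (simp add: Xv_def max_def)

lemma Xv_big: "vnorm d y > 1 \<Longrightarrow> Xv d y = (\<lambda>j. y j / vnorm d y)"
  by (simp add: Xv_def max_def)

lemma phi_ge: "vnorm d y - 1/2 \<le> phi d y"
proof (cases "vnorm d y \<le> 1")
  case True
  hence "phi d y = (vnorm d y)^2 / 2" by (simp add: phi_def Xv_small dot_self)
  moreover have "0 \<le> (vnorm d y - 1)^2" by simp
  ultimately show ?thesis by (simp add: power2_eq_square algebra_simps)
next
  case False
  hence r: "vnorm d y > 1" by simp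
  have "dot d y (Xv d y) = dot d y y / vnorm d y"
    using r by (simp add: Xv_big dot_def sum_divide_distrib)
  also have "\<dots> = vnorm d y" using r by (simp add: dot_self power2_eq_square)
  finally have 1: "dot d y (Xv d y) = vnorm d y" .
  have 2: "vnorm d (Xv d y) = 1" using r by (simp add: Xv_big vnorm_div)
  show ?thesis unfolding phi_def 1 2 by simp
qed

lemma proj_var:
  assumes u: "vnorm d u \<le> 1"
  shows "dot d (\<lambda>j. y j - Xv d y j) (\<lambda>j. u j - Xv d y j) \<le> 0"
proof (cases "vnorm d y \<le> 1")
  case True thus ?thesis by (simp add: Xv_small dot_def)
next
  case False
  define r where "r = vnorm d y"
  have r: "r > 1" using False r_def by simp
  have "dot d (\<lambda>j. y j - Xv d y j) (\<lambda>j. u j - Xv d y j)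
      = (\<Sum>j<d. (1 - 1/r) * (y j * u j) - (1 - 1/r) * ((y j)^2 / r))"
    unfolding dot_def using r r_def
    by (intro sum.cong refl) (simp add: Xv_big field_simps power2_eq_square)
  also have "\<dots> = (1 - 1/r) * (dot d y u - r^2 / r)"
    by (simp add: sum_subtractf sum_distrib_left[symmetric] sum_divide_distrib[symmetric]
                  dot_def right_diff_distrib r_def vnorm_sq)
  also have "\<dots> \<le> 0"
  proof -
    have "dot d y u \<le> r" using dot_le[of d y u] u r r_def
      by (smt (verit) mult_left_le vnorm_nonneg)
    moreover have "r^2 / r = r" using r by (simp add: power2_eq_square)
    moreover have "1 - 1/r \<ge> 0" using r by simp
    ultimately show ?thesis by (simp add: mult_nonneg_nonpos)
  qed
  finally show ?thesis .
qed

lemma phi_smooth: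
  "phi d (\<lambda>j. y j + h j) \<le> phi d y + dot d h (Xv d y) + (vnorm d h)^2 / 2"
proof -
  define x where "x = Xv d y"
  define x' where "x' = Xv d (\<lambda>j. y j + h j)"
  have var: "dot d (\<lambda>j. y j - x j) (\<lambda>j. x' j - x j) \<le> 0"
    unfolding x_def by (rule proj_var) (simp add: x'_def vnorm_Xv)
  have "(\<Sum>j<d. ((y j + h j) * x' j - (x' j)^2/2) - (y j * x j - (x j)^2/2) - h j * x j - (h j)^2/2)
        \<le> dot d (\<lambda>j. y j - x j) (\<lambda>j. x' j - x j)"
    unfolding dot_def by (rule sum_mono) (rule pw_aux)
  also have "\<dots> \<le> 0" by (rule var)
  finally have "(\<Sum>j<d. ((y j + h j) * x' j - (x' j)^2/2) - (y j * x j - (x j)^2/2) - h j * x j - (h j)^2/2) \<le> 0" .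
  moreover have "(\<Sum>j<d. ((y j + h j) * x' j - (x' j)^2/2) - (y j * x j - (x j)^2/2) - h j * x j - (h j)^2/2)
     = phi d (\<lambda>j. y j + h j) - phi d y - dot d h (Xv d y) - (vnorm d h)^2 / 2"
    unfolding phi_def x_def[symmetric] x'_def[symmetric] dot_def vnorm_sq
    by (simp add: sum_subtractf sum_divide_distrib)
  ultimately show ?thesis by simp
qed


lemma embed_fin:
  fixes f :: "'a \<Rightarrow> real"
  assumes nn: "\<And>x. 0 \<le> f x" and fin: "finite S" and out: "\<And>x. x \<notin> S \<Longrightarrow> f x = 0"
    and s1: "(\<Sum>x\<in>S. f x) = 1"
  shows "pmf (embed_pmf f) = f" "set_pmf (embed_pmf f) \<subseteq> S"
    "measure_pmf.expectation (embed_pmf f) g = (\<Sum>x\<in>S. f x * g x)"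
proof -
  have "(\<integral>\<^sup>+x. ennreal (f x) \<partial>count_space UNIV) = (\<Sum>x\<in>S. ennreal (f x))"
    using fin out by (intro nn_integral_count_space') auto
  also have "\<dots> = ennreal (\<Sum>x\<in>S. f x)" using nn by (simp add: sum_ennreal)
  finally have prob: "(\<integral>\<^sup>+x. ennreal (f x) \<partial>count_space UNIV) = 1" using s1 by simp
  show p: "pmf (embed_pmf f) = f" using pmf_embed_pmf[OF nn prob] by auto
  show s: "set_pmf (embed_pmf f) \<subseteq> S" using set_embed_pmf[OF nn prob] out by auto
  show "measure_pmf.expectation (embed_pmf f) g = (\<Sum>x\<in>S. f x * g x)"
    using s by (subst integral_measure_pmf[OF fin]) (auto simp: p)
qed

lemma E_fin: "finite (set_pmf p) \<Longrightarrow> measure_pmf.expectation p f = (\<Sum>a\<in>set_pmf p. pmf p a * f a)"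
  by (subst integral_measure_pmf[of "set_pmf p"]) auto

lemma E_bind:
  assumes "finite (set_pmf p)" "\<And>a. a \<in> set_pmf p \<Longrightarrow> finite (set_pmf (q a))"
  shows "measure_pmf.expectation (bind_pmf p q) h = measure_pmf.expectation p (\<lambda>a. measure_pmf.expectation (q a) (h::_\<Rightarrow>real))"
  using pmf_expectation_bind[of "set_pmf p" q p h] assms E_fin[of p] by auto

lemma E_mono:
  assumes "finite (set_pmf p)" "\<And>a. a \<in> set_pmf p \<Longrightarrow> f a \<le> (g a::real)"
  shows "measure_pmf.expectation p f \<le> measure_pmf.expectation p g"
  using assms by (simp add: E_fin sum_mono mult_left_mono)

lemma E_add: "finite (set_pmf p) \<Longrightarrow> measure_pmf.expectation p (\<lambda>a. f a + g a) = measure_pmf.expectation p f + measure_pmf.expectation p (g::_\<Rightarrow>real)"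
  by (simp add: E_fin sum.distrib algebra_simps)

lemma E_diff: "finite (set_pmf p) \<Longrightarrow> measure_pmf.expectation p (\<lambda>a. f a - g a) = measure_pmf.expectation p f - measure_pmf.expectation p (g::_\<Rightarrow>real)"
  by (simp add: E_fin sum_subtractf algebra_simps)

lemma E_cmult: "finite (set_pmf p) \<Longrightarrow> measure_pmf.expectation p (\<lambda>a. c * f a) = c * measure_pmf.expectation p (f::_\<Rightarrow>real)"
  by (simp add: E_fin sum_distrib_left algebra_simps)

lemma E_const: "finite (set_pmf p) \<Longrightarrow> measure_pmf.expectation p (\<lambda>a. c) = (c::real)"
  by simp

lemma E_sum: "finite (set_pmf p) \<Longrightarrow> measure_pmf.expectation p (\<lambda>a. \<Sum>k\<in>K. f k a) = (\<Sum>k\<in>K. measure_pmf.expectation p (f k)::real)"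
  by (simp add: E_fin sum_distrib_left sum.swap[of _ K])

datatype aug = Aug (aw: "nat \<Rightarrow> real") (ay: "nat \<Rightarrow> real") (ais: "nat list") (aX: "nat \<Rightarrow> real")
  (aV: "nat \<Rightarrow> real") (aR: real) (aS1: real) (aS2: real)

locale SP =
  fixes n d :: nat and A :: "nat \<Rightarrow> nat \<Rightarrow> real" and \<epsilon> :: real
  assumes n2: "n \<ge> 2" and epos: "\<epsilon> > 0" and rows: "\<And>i. i < n \<Longrightarrow> vnorm d (A i) \<le> 1"
begin

definition "T = sp_T n \<epsilon>"
definition "\<eta> = sp_eta n \<epsilon>"
definition "hy = 1 / sqrt (2 * real T)"
definition Wt :: "(nat \<Rightarrow> real) \<Rightarrow> real" where "Wt w = (\<Sum>k<n. w k)"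
definition Pw :: "(nat \<Rightarrow> real) \<Rightarrow> nat \<Rightarrow> real" where "Pw w i = w i / Wt w"
definition "idist w = embed_pmf (\<lambda>i. if i < n then Pw w i else 0)"
definition "jdist x = (if vnorm d x = 0 then return_pmf 0
     else embed_pmf (\<lambda>j. if j < d then (x j)^2 / (vnorm d x)^2 else 0))"
definition "vt x j k = (if vnorm d x = 0 then 0 else clip (A k j * (vnorm d x)^2 / x j) (1/\<eta>))"
definition "neww w x j = (\<lambda>k. w k * (1 - \<eta> * vt x j k + \<eta>^2 * (vt x j k)^2))"
definition "newy y i = (\<lambda>k. y k + hy * A i k)"

lemma sp_step_alt: "sp_step n d A \<epsilon> s = bind_pmf (idist (fst s)) (\<lambda>i. bind_pmf (jdist (Xv d (snd s)))
    (\<lambda>j. return_pmf (i, (neww (fst s) (Xv d (snd s)) j, newy (snd s) i))))"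
  unfolding sp_step_def Let_def idist_def jdist_def neww_def newy_def vt_def Pw_def Wt_def Xv_def
    hy_def T_def \<eta>_def
  by simp

definition "upd a i j = (let w = aw a; y = ay a; x = Xv d y in
   Aug (neww w x j) (newy y i) (ais a @ [i]) (\<lambda>k. aX a k + x k) (\<lambda>k. aV a k + vt x j k)
     (aR a + dot d (A i) x) (aS1 a + (\<Sum>k<n. Pw w k * vt x j k))
     (aS2 a + (\<Sum>k<n. Pw w k * (vt x j k)^2)))"

definition "aug_step a = bind_pmf (idist (aw a)) (\<lambda>i. bind_pmf (jdist (Xv d (ay a))) (\<lambda>j. return_pmf (upd a i j)))"

primrec aug_run :: "nat \<Rightarrow> aug pmf" where
  "aug_run 0 = return_pmf (Aug (\<lambda>_. 1) (\<lambda>_. 0) [] (\<lambda>_. 0) (\<lambda>_. 0) 0 0 0)"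
| "aug_run (Suc t) = bind_pmf (aug_run t) aug_step"

definition "proj a = ((aw a, ay a), ais a)"

lemma run_proj: "map_pmf proj (aug_run t) = sp_run n d A \<epsilon> t"
proof (induction t)
  case 0 thus ?case by (simp add: proj_def)
next
  case (Suc t)
  have "map_pmf proj (aug_run (Suc t)) = bind_pmf (aug_run t) (\<lambda>a. map_pmf proj (aug_step a))"
    by (simp add: map_bind_pmf)
  also have "\<dots> = bind_pmf (aug_run t) (\<lambda>a. (\<lambda>(s, is). map_pmf (\<lambda>(i, s'). (s', is @ [i])) (sp_step n d A \<epsilon> s)) (proj a))"
    by (intro bind_pmf_cong refl)
       (simp add: proj_def aug_step_def sp_step_alt map_bind_pmf upd_def Let_def)
  also have "\<dots> = sp_run n d A \<epsilon> (Suc t)"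
    by (simp add: Suc.IH[symmetric] bind_map_pmf)
  finally show ?case .
qed

end


context SP begin

lemma ln_n_pos: "ln (real n) > 0" using n2 by simp

lemma T_ge: "real T \<ge> 200^2 / \<epsilon>^2 * ln (real n)"
proof -
  have "200^2 / \<epsilon>^2 * ln (real n) \<le> of_int \<lceil>200^2 / \<epsilon>^2 * ln (real n)\<rceil>" by (rule le_of_int_ceiling)
  also have "\<dots> = real T" unfolding T_def sp_T_def
    using ln_n_pos epos by (simp add: zero_le_mult_iff)
  finally show ?thesis .
qed

lemma T_pos: "T > 0"
proof -
  have "0 < 200^2 / \<epsilon>^2 * ln (real n)" using ln_n_pos epos by simp
  with T_ge show ?thesis by linarith
qed

lemma eta_pos: "\<eta> > 0"
  unfolding \<eta>_def sp_eta_def T_def[symmetric] using T_pos ln_n_pos by simp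

lemma hy_pos: "hy > 0"
  unfolding hy_def using T_pos by simp

lemma vt_abs: "\<bar>vt x j k\<bar> \<le> 1/\<eta>"
  unfolding vt_def using eta_pos clip_abs_le[of "1/\<eta>"] by auto

lemma factor_pos: "0 < 1 - \<eta> * v + \<eta>^2 * v^2"
proof -
  have "1 - \<eta> * v + \<eta>^2 * v^2 = (\<eta> * v - 1/2)^2 + 3/4" by (simp add: power2_eq_square algebra_simps)
  moreover have "0 \<le> (\<eta> * v - 1/2)^2" by simp
  ultimately show ?thesis by linarith
qed

lemma factor_ge_exp: "\<bar>v\<bar> \<le> 1/\<eta> \<Longrightarrow> exp (- \<eta> * v) \<le> 1 - \<eta> * v + \<eta>^2 * v^2"
proof -
  assume v: "\<bar>v\<bar> \<le> 1/\<eta>"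
  have "\<bar>\<eta> * v\<bar> \<le> 1" using v eta_pos by (simp add: abs_mult field_simps)
  hence "- \<eta> * v \<le> 1" by linarith
  from exp_le_quad[OF this] show ?thesis by (simp add: power2_eq_square algebra_simps)
qed

lemma n_ne: "{..<n} \<noteq> {}" using n2 by (simp add: lessThan_empty_iff)

lemma Wt_pos: assumes "\<And>k. k < n \<Longrightarrow> w k > 0" shows "Wt w > 0"
  unfolding Wt_def by (rule sum_pos[OF finite_lessThan n_ne]) (use assms in auto)

lemma idist_props:
  assumes w: "\<And>k. k < n \<Longrightarrow> w k > 0"
  shows "set_pmf (idist w) \<subseteq> {..<n}" "measure_pmf.expectation (idist w) g = (\<Sum>i<n. Pw w i * g i)"
proof -
  have W: "Wt w > 0" using w by (intro Wt_pos) auto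
  have s1: "(\<Sum>i<n. (if i < n then Pw w i else 0)) = 1"
    using W by (simp add: Pw_def sum_divide_distrib[symmetric] Wt_def)
  have nn: "\<And>i. 0 \<le> (if i < n then Pw w i else 0)"
    using w W by (simp add: Pw_def less_imp_le)
  note e = embed_fin[OF nn finite_lessThan _ s1]
  show "set_pmf (idist w) \<subseteq> {..<n}" unfolding idist_def by (rule e) auto
  show "measure_pmf.expectation (idist w) g = (\<Sum>i<n. Pw w i * g i)" unfolding idist_def
    by (subst e(3)) auto
qed

lemma Pw_sum: "(\<And>k. k < n \<Longrightarrow> w k > 0) \<Longrightarrow> (\<Sum>k<n. Pw w k) = 1"
proof -
  assume w: "\<And>k. k < n \<Longrightarrow> w k > 0"
  have W: "Wt w > 0" using w by (intro Wt_pos) auto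
  thus ?thesis by (simp add: Pw_def Wt_def flip: sum_divide_distrib)
qed

lemma Pw_nonneg: "(\<And>k. w k > 0) \<Longrightarrow> 0 \<le> Pw w i"
proof -
  assume w: "\<And>k. w k > 0"
  have W: "Wt w > 0" using w by (intro Wt_pos) auto
  thus ?thesis using w[of i] unfolding Pw_def by (intro divide_nonneg_pos) auto
qed

lemma jdist_fin: "finite (set_pmf (jdist x))"
proof (cases "vnorm d x = 0")
  case True thus ?thesis by (simp add: jdist_def)
next
  case False
  hence r: "vnorm d x > 0" using vnorm_nonneg[of d x] by linarith
  have s1: "(\<Sum>j<d. (if j < d then (x j)^2 / (vnorm d x)^2 else 0)) = 1"
    using r by (simp add: sum_divide_distrib[symmetric] vnorm_sq[symmetric])
  have nn: "\<And>j. 0 \<le> (if j < d then (x j)^2 / (vnorm d x)^2 else 0)" by simp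
  note e = embed_fin[OF nn finite_lessThan _ s1]
  have "set_pmf (jdist x) = set_pmf (embed_pmf (\<lambda>j. if j < d then (x j)^2 / (vnorm d x)^2 else 0))"
    unfolding jdist_def using False by simp
  also have "\<dots> \<subseteq> {..<d}" by (rule e) auto
  finally have "set_pmf (jdist x) \<subseteq> {..<d}" .
  thus ?thesis using finite_subset by blast
qed

lemma jdist_E:
  assumes "vnorm d x \<noteq> 0"
  shows "measure_pmf.expectation (jdist x) g = (\<Sum>j<d. (x j)^2 / (vnorm d x)^2 * g j)"
proof -
  have r: "vnorm d x > 0" using vnorm_nonneg[of d x] assms by linarith
  have s1: "(\<Sum>j<d. (if j < d then (x j)^2 / (vnorm d x)^2 else 0)) = 1"
    using r by (simp add: sum_divide_distrib[symmetric] vnorm_sq[symmetric])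
  have nn: "\<And>j. 0 \<le> (if j < d then (x j)^2 / (vnorm d x)^2 else 0)" by simp
  note e = embed_fin[OF nn finite_lessThan _ s1]
  have "measure_pmf.expectation (jdist x) g = measure_pmf.expectation (embed_pmf (\<lambda>j. if j < d then (x j)^2 / (vnorm d x)^2 else 0)) g"
    unfolding jdist_def using assms by simp
  also have "\<dots> = (\<Sum>j<d. (if j < d then (x j)^2 / (vnorm d x)^2 else 0) * g j)" by (rule e) auto
  finally show ?thesis by simp
qed

lemma pv_eq: "r \<noteq> 0 \<Longrightarrow> (xj::real)^2 / r^2 * (a * r^2 / xj) = a * xj"
  by (cases "xj = 0") (auto simp: field_simps power2_eq_square)

lemma pv2_le: assumes "r \<noteq> 0" shows "(xj::real)^2 / r^2 * (a * r^2 / xj)^2 \<le> a^2 * r^2"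
proof (cases "xj = 0")
  case True thus ?thesis by simp
next
  case False thus ?thesis using assms by (simp add: field_simps power2_eq_square)
qed

lemma v_stats:
  assumes k: "k < n" and x: "vnorm d x \<le> 1"
  shows "\<bar>measure_pmf.expectation (jdist x) (\<lambda>j. vt x j k) - dot d (A k) x\<bar> \<le> \<eta> \<and>
         measure_pmf.expectation (jdist x) (\<lambda>j. (vt x j k)^2) \<le> 1"
proof (cases "vnorm d x = 0")
  case True
  hence "\<forall>j<d. x j = 0" by (simp add: vnorm_zero_iff)
  hence "dot d (A k) x = 0" by (simp add: dot_def)
  thus ?thesis using True eta_pos by (simp add: jdist_def vt_def)
next
  case False
  define r where "r = vnorm d x"
  have r0: "r \<noteq> 0" using False r_def by simp
  define p where "p j = (x j)^2 / r^2" for j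
  define u where "u j = A k j * r^2 / x j" for j
  have p_nn: "\<And>j. 0 \<le> p j" by (simp add: p_def)
  have Ev: "measure_pmf.expectation (jdist x) (\<lambda>j. vt x j k) = (\<Sum>j<d. p j * clip (u j) (1/\<eta>))"
    using False by (simp add: jdist_E vt_def p_def u_def r_def)
  have Ev2: "measure_pmf.expectation (jdist x) (\<lambda>j. (vt x j k)^2) = (\<Sum>j<d. p j * (clip (u j) (1/\<eta>))^2)"
    using False by (simp add: jdist_E vt_def p_def u_def r_def)
  have dt: "dot d (A k) x = (\<Sum>j<d. p j * u j)"
    unfolding dot_def p_def u_def by (intro sum.cong refl) (metis pv_eq[OF r0] mult.commute)
  have pu2: "(\<Sum>j<d. p j * (u j)^2) \<le> 1"
  proof -
    have "(\<Sum>j<d. p j * (u j)^2) \<le> (\<Sum>j<d. (A k j)^2 * r^2)"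
      unfolding p_def u_def by (rule sum_mono) (rule pv2_le[OF r0])
    also have "\<dots> = (vnorm d (A k))^2 * r^2" by (simp add: vnorm_sq sum_distrib_right)
    also have "\<dots> \<le> 1 * 1"
      using rows[OF k] x r_def by (intro mult_mono power_le_one) auto
    finally show ?thesis by simp
  qed
  have "\<bar>(\<Sum>j<d. p j * clip (u j) (1/\<eta>)) - (\<Sum>j<d. p j * u j)\<bar>
        = \<bar>\<Sum>j<d. p j * (clip (u j) (1/\<eta>) - u j)\<bar>"
    by (simp add: sum_subtractf right_diff_distrib)
  also have "\<dots> \<le> (\<Sum>j<d. \<bar>p j * (clip (u j) (1/\<eta>) - u j)\<bar>)" by (rule sum_abs)
  also have "\<dots> \<le> (\<Sum>j<d. p j * ((u j)^2 / (1/\<eta>)))"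
    using p_nn eta_pos clip_err[of "1/\<eta>"] by (intro sum_mono) (simp add: abs_mult mult_left_mono)
  also have "\<dots> = \<eta> * (\<Sum>j<d. p j * (u j)^2)" by (simp add: sum_distrib_left algebra_simps)
  also have "\<dots> \<le> \<eta>" using pu2 eta_pos by (simp add: mult_le_cancel_left1)
  finally have 1: "\<bar>measure_pmf.expectation (jdist x) (\<lambda>j. vt x j k) - dot d (A k) x\<bar> \<le> \<eta>"
    using Ev dt by simp
  have "(\<Sum>j<d. p j * (clip (u j) (1/\<eta>))^2) \<le> (\<Sum>j<d. p j * (u j)^2)"
    using p_nn eta_pos clip_abs_le2[of "1/\<eta>"]
    by (intro sum_mono mult_left_mono) (auto simp: abs_le_square_iff)
  with pu2 Ev2 have 2: "measure_pmf.expectation (jdist x) (\<lambda>j. (vt x j k)^2) \<le> 1" by simp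
  from 1 2 show ?thesis by blast
qed

end


context SP begin

definition Inv :: "nat \<Rightarrow> aug \<Rightarrow> bool" where
"Inv t a \<longleftrightarrow> length (ais a) = t \<and> set (ais a) \<subseteq> {..<n} \<and> (\<forall>k. aw a k > 0) \<and>
  ay a = (\<lambda>k. hy * sum_list (map (\<lambda>i. A i k) (ais a))) \<and> vnorm d (aX a) \<le> t \<and>
  phi d (ay a) \<le> hy * aR a + t * hy^2 / 2 \<and>
  Wt (aw a) \<le> n * exp (- \<eta> * aS1 a + \<eta>^2 * aS2 a) \<and>
  (\<forall>k<n. aw a k \<ge> exp (- \<eta> * aV a k)) \<and> vnorm d (ay a) \<le> t * hy"

lemma Inv_0: "Inv 0 (Aug (\<lambda>_. 1) (\<lambda>_. 0) [] (\<lambda>_. 0) (\<lambda>_. 0) 0 0 0)"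
proof -
  have v0: "vnorm d (\<lambda>_. 0) = 0" by (simp add: vnorm_def)
  have "phi d (\<lambda>_. 0) = 0" by (simp add: phi_def dot_def v0 Xv_def)
  moreover have "Wt (\<lambda>_. 1) = n" by (simp add: Wt_def)
  ultimately show ?thesis by (simp add: Inv_def v0 fun_eq_iff)
qed

lemma Wt_Pw: "Wt w > 0 \<Longrightarrow> Wt w * (\<Sum>k<n. Pw w k * f k) = (\<Sum>k<n. w k * f k)"
  by (simp add: sum_distrib_left Pw_def)

lemma Inv_step:
  assumes I: "Inv t a" and i: "i < n"
  shows "Inv (Suc t) (upd a i j)"
proof -
  define w where "w = aw a"
  define y where "y = ay a"
  define x where "x = Xv d y"
  define v where "v k = vt x j k" for k
  have wpos: "\<And>k. w k > 0" using I by (simp add: Inv_def w_def)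
  have W: "Wt w > 0" using wpos by (intro Wt_pos)
  have vabs: "\<And>k. \<bar>v k\<bar> \<le> 1/\<eta>" unfolding v_def by (rule vt_abs)
  have xn: "vnorm d x \<le> 1" unfolding x_def by (rule vnorm_Xv)
  have Ai: "vnorm d (A i) \<le> 1" using rows[OF i] .
  have u: "upd a i j = Aug (neww w x j) (newy y i) (ais a @ [i]) (\<lambda>k. aX a k + x k) (\<lambda>k. aV a k + v k)
     (aR a + dot d (A i) x) (aS1 a + (\<Sum>k<n. Pw w k * v k)) (aS2 a + (\<Sum>k<n. Pw w k * (v k)^2))"
    by (simp add: upd_def Let_def w_def y_def x_def v_def)
  have nw: "neww w x j = (\<lambda>k. w k * (1 - \<eta> * v k + \<eta>^2 * (v k)^2))" by (simp add: neww_def v_def)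
  have c1: "\<forall>k. neww w x j k > 0" using wpos factor_pos by (simp add: nw)
  have c2: "newy y i = (\<lambda>k. hy * sum_list (map (\<lambda>i. A i k) (ais a @ [i])))"
    using I by (simp add: Inv_def y_def newy_def fun_eq_iff algebra_simps)
  have c3: "vnorm d (\<lambda>k. aX a k + x k) \<le> Suc t"
    using vnorm_add[of d "aX a" x] I xn by (simp add: Inv_def)
  have c4: "phi d (newy y i) \<le> hy * (aR a + dot d (A i) x) + (Suc t) * hy^2 / 2"
  proof -
    have "phi d (newy y i) \<le> phi d y + dot d (\<lambda>k. hy * A i k) (Xv d y) + (vnorm d (\<lambda>k. hy * A i k))^2 / 2"
      unfolding newy_def by (rule phi_smooth)
    also have "dot d (\<lambda>k. hy * A i k) (Xv d y) = hy * dot d (A i) x"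
      by (simp add: dot_def x_def sum_distrib_left algebra_simps)
    also have "vnorm d (\<lambda>k. hy * A i k) = hy * vnorm d (A i)" using hy_pos by (simp add: vnorm_scale)
    also have "(hy * vnorm d (A i))^2 \<le> hy^2"
    proof -
      have "hy * vnorm d (A i) \<le> hy * 1" using Ai hy_pos by (intro mult_left_mono) auto
      thus ?thesis using hy_pos by (intro power_mono) auto
    qed
    hence "phi d y + hy * dot d (A i) x + (hy * vnorm d (A i))^2 / 2 \<le> phi d y + hy * dot d (A i) x + hy^2 / 2"
      by simp
    finally have "phi d (newy y i) \<le> phi d y + hy * dot d (A i) x + hy^2 / 2" by simp
    moreover have "phi d y \<le> hy * aR a + t * hy^2 / 2" using I unfolding Inv_def y_def by blast
    ultimately show ?thesis by (simp add: algebra_simps add_divide_distrib)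
  qed
  define D1 where "D1 = (\<Sum>k<n. Pw w k * v k)"
  define D2 where "D2 = (\<Sum>k<n. Pw w k * (v k)^2)"
  have c5: "Wt (neww w x j) \<le> n * exp (- \<eta> * (aS1 a + D1) + \<eta>^2 * (aS2 a + D2))"
  proof -
    have "Wt (neww w x j) = (\<Sum>k<n. w k * (1 - \<eta> * v k + \<eta>^2 * (v k)^2))" by (simp add: nw Wt_def)
    also have "\<dots> = Wt w * (\<Sum>k<n. Pw w k * (1 - \<eta> * v k + \<eta>^2 * (v k)^2))" by (rule Wt_Pw[OF W, symmetric])
    also have "(\<Sum>k<n. Pw w k * (1 - \<eta> * v k + \<eta>^2 * (v k)^2)) = (\<Sum>k<n. Pw w k) - \<eta> * D1 + \<eta>^2 * D2"
      by (simp add: D1_def D2_def algebra_simps sum.distrib sum_subtractf sum_distrib_left)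
    also have "(\<Sum>k<n. Pw w k) = 1" using Pw_sum wpos by blast
    also have "Wt w * (1 - \<eta> * D1 + \<eta>^2 * D2) \<le> Wt w * exp (- \<eta> * D1 + \<eta>^2 * D2)"
    proof -
      have "1 + (- \<eta> * D1 + \<eta>^2 * D2) \<le> exp (- \<eta> * D1 + \<eta>^2 * D2)" by (rule exp_ge_add_one_self)
      hence "1 - \<eta> * D1 + \<eta>^2 * D2 \<le> exp (- \<eta> * D1 + \<eta>^2 * D2)" by linarith
      thus ?thesis using W by (intro mult_left_mono) auto
    qed
    also have "\<dots> \<le> n * exp (- \<eta> * aS1 a + \<eta>^2 * aS2 a) * exp (- \<eta> * D1 + \<eta>^2 * D2)"
      using I by (intro mult_right_mono) (auto simp: Inv_def w_def)
    also have "\<dots> = n * exp (- \<eta> * (aS1 a + D1) + \<eta>^2 * (aS2 a + D2))"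
      by (simp only: mult.assoc exp_add[symmetric]) (simp add: algebra_simps)
    finally show ?thesis .
  qed
  have c6: "\<forall>k<n. neww w x j k \<ge> exp (- \<eta> * (aV a k + v k))"
  proof (intro allI impI)
    fix k assume k: "k < n"
    have "exp (- \<eta> * (aV a k + v k)) = exp (- \<eta> * aV a k) * exp (- \<eta> * v k)"
      by (simp only: exp_add[symmetric]) (simp add: algebra_simps)
    also have "\<dots> \<le> w k * (1 - \<eta> * v k + \<eta>^2 * (v k)^2)"
      using I k factor_ge_exp[OF vabs[of k]] by (intro mult_mono) (auto simp: Inv_def w_def less_imp_le)
    finally show "neww w x j k \<ge> exp (- \<eta> * (aV a k + v k))" by (simp add: nw)
  qed
  have c7: "vnorm d (newy y i) \<le> Suc t * hy"
  proof -
    have "vnorm d (newy y i) \<le> vnorm d y + vnorm d (\<lambda>k. hy * A i k)"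
      unfolding newy_def by (rule vnorm_add)
    also have "vnorm d (\<lambda>k. hy * A i k) = hy * vnorm d (A i)" using hy_pos by (simp add: vnorm_scale)
    also have "hy * vnorm d (A i) \<le> hy" using Ai hy_pos by (simp add: mult_le_cancel_left1)
    finally have "vnorm d (newy y i) \<le> vnorm d y + hy" by simp
    moreover have "vnorm d y \<le> t * hy" using I unfolding Inv_def y_def by blast
    ultimately show ?thesis by (simp add: algebra_simps)
  qed
  show ?thesis unfolding u Inv_def
    using I i c1 c2 c3 c4 c5 c6 c7 by (simp add: Inv_def D1_def D2_def)
qed

lemma set_aug_step:
  assumes "Inv t a"
  shows "set_pmf (aug_step a) \<subseteq> {upd a i j | i j. i < n}"
proof -
  have "set_pmf (idist (aw a)) \<subseteq> {..<n}" using assms by (intro idist_props) (auto simp: Inv_def)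
  thus ?thesis by (auto simp: aug_step_def)
qed

lemma fin_aug_step:
  assumes "Inv t a"
  shows "finite (set_pmf (aug_step a))"
proof -
  have "set_pmf (idist (aw a)) \<subseteq> {..<n}" using assms by (intro idist_props) (auto simp: Inv_def)
  hence "finite (set_pmf (idist (aw a)))" using finite_subset by blast
  thus ?thesis by (auto simp: aug_step_def jdist_fin)
qed

lemma Inv_run: "a \<in> set_pmf (aug_run t) \<Longrightarrow> Inv t a"
proof (induction t arbitrary: a)
  case 0 thus ?case using Inv_0 by simp
next
  case (Suc t)
  then obtain b where b: "b \<in> set_pmf (aug_run t)" and a: "a \<in> set_pmf (aug_step b)" by auto
  have Ib: "Inv t b" using Suc.IH b .
  then obtain i j where "a = upd b i j" "i < n" using set_aug_step[OF Ib] a by blast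
  thus ?case using Inv_step[OF Ib] by simp
qed

lemma fin_run: "finite (set_pmf (aug_run t))"
proof (induction t)
  case 0 thus ?case by simp
next
  case (Suc t)
  thus ?case using fin_aug_step Inv_run by auto
qed

end


context SP begin

abbreviation "init \<equiv> Aug (\<lambda>_. 1) (\<lambda>_. 0) [] (\<lambda>_. 0) (\<lambda>_. 0) 0 0 0"

lemma E_step:
  assumes I: "Inv t a"
  shows "measure_pmf.expectation (aug_step a) F =
    (\<Sum>i<n. Pw (aw a) i * measure_pmf.expectation (jdist (Xv d (ay a))) (\<lambda>j. F (upd a i j)))"
proof -
  have w: "\<And>k. k < n \<Longrightarrow> aw a k > 0" using I by (auto simp: Inv_def)
  have si: "set_pmf (idist (aw a)) \<subseteq> {..<n}" using idist_props(1)[OF w] .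
  hence fi: "finite (set_pmf (idist (aw a)))" using finite_subset by blast
  have "measure_pmf.expectation (aug_step a) F = measure_pmf.expectation (idist (aw a))
      (\<lambda>i. measure_pmf.expectation (bind_pmf (jdist (Xv d (ay a))) (\<lambda>j. return_pmf (upd a i j))) F)"
    unfolding aug_step_def by (rule E_bind[OF fi]) (auto simp: jdist_fin)
  also have "\<dots> = measure_pmf.expectation (idist (aw a))
      (\<lambda>i. measure_pmf.expectation (jdist (Xv d (ay a))) (\<lambda>j. F (upd a i j)))"
    by (subst E_bind) (auto simp: jdist_fin)
  also have "\<dots> = (\<Sum>i<n. Pw (aw a) i * measure_pmf.expectation (jdist (Xv d (ay a))) (\<lambda>j. F (upd a i j)))"
    by (rule idist_props(2)[OF w])
  finally show ?thesis .
qed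

lemma drift_add:
  fixes F :: "aug \<Rightarrow> real"
  assumes step: "\<And>t a. Inv t a \<Longrightarrow> measure_pmf.expectation (aug_step a) F \<le> F a + c"
  shows "measure_pmf.expectation (aug_run t) F \<le> F init + t * c"
proof (induction t)
  case 0 thus ?case by simp
next
  case (Suc t)
  have "measure_pmf.expectation (aug_run (Suc t)) F
      = measure_pmf.expectation (aug_run t) (\<lambda>a. measure_pmf.expectation (aug_step a) F)"
    by (simp, rule E_bind[OF fin_run]) (auto intro: fin_aug_step Inv_run)
  also have "\<dots> \<le> measure_pmf.expectation (aug_run t) (\<lambda>a. F a + c)"
    by (rule E_mono[OF fin_run]) (auto intro: step Inv_run)
  also have "\<dots> = measure_pmf.expectation (aug_run t) F + c" by (simp add: E_add[OF fin_run])
  also have "\<dots> \<le> F init + t * c + c" using Suc.IH by simp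
  finally show ?case by (simp add: algebra_simps)
qed

lemma drift_mul:
  fixes F :: "aug \<Rightarrow> real"
  assumes step: "\<And>t a. Inv t a \<Longrightarrow> measure_pmf.expectation (aug_step a) F \<le> q * F a" and q: "q \<ge> 0"
  shows "measure_pmf.expectation (aug_run t) F \<le> q^t * F init"
proof (induction t)
  case 0 thus ?case by simp
next
  case (Suc t)
  have "measure_pmf.expectation (aug_run (Suc t)) F
      = measure_pmf.expectation (aug_run t) (\<lambda>a. measure_pmf.expectation (aug_step a) F)"
    by (simp, rule E_bind[OF fin_run]) (auto intro: fin_aug_step Inv_run)
  also have "\<dots> \<le> measure_pmf.expectation (aug_run t) (\<lambda>a. q * F a)"
    by (rule E_mono[OF fin_run]) (auto intro: step Inv_run)
  also have "\<dots> = q * measure_pmf.expectation (aug_run t) F" by (simp add: E_cmult[OF fin_run])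
  also have "\<dots> \<le> q * (q^t * F init)" using Suc.IH q by (intro mult_left_mono) auto
  finally show ?case by (simp add: algebra_simps)
qed

definition "Lin a = aR a - aS1 a + \<eta> * aS2 a"

lemma Lin_step: assumes I: "Inv t a" shows "measure_pmf.expectation (aug_step a) Lin \<le> Lin a + 2 * \<eta>"
proof -
  define w where "w = aw a"
  define x where "x = Xv d (ay a)"
  define Ev where "Ev k = measure_pmf.expectation (jdist x) (\<lambda>j. vt x j k)" for k
  define Ev2 where "Ev2 k = measure_pmf.expectation (jdist x) (\<lambda>j. (vt x j k)^2)" for k
  have wpos: "\<And>k. w k > 0" using I by (simp add: Inv_def w_def)
  have xn: "vnorm d x \<le> 1" unfolding x_def by (rule vnorm_Xv)
  have P1: "(\<Sum>k<n. Pw w k) = 1" using Pw_sum wpos by blast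
  have Pn: "\<And>k. 0 \<le> Pw w k" using Pw_nonneg wpos by blast
  define M where "M = (\<Sum>k<n. Pw w k * Ev k) - \<eta> * (\<Sum>k<n. Pw w k * Ev2 k)"
  have inner: "\<And>i. measure_pmf.expectation (jdist x) (\<lambda>j. Lin (upd a i j)) = Lin a + dot d (A i) x - M"
  proof -
    fix i
    have "(\<lambda>j. Lin (upd a i j)) = (\<lambda>j. (Lin a + dot d (A i) x) - ((\<Sum>k<n. Pw w k * vt x j k) - \<eta> * (\<Sum>k<n. Pw w k * (vt x j k)^2)))"
      by (simp add: fun_eq_iff Lin_def upd_def Let_def w_def x_def algebra_simps)
    hence "measure_pmf.expectation (jdist x) (\<lambda>j. Lin (upd a i j))
       = (Lin a + dot d (A i) x) - ((\<Sum>k<n. Pw w k * Ev k) - \<eta> * (\<Sum>k<n. Pw w k * Ev2 k))"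
      by (simp add: E_diff[OF jdist_fin] E_sum[OF jdist_fin] E_cmult[OF jdist_fin] Ev_def Ev2_def)
    thus "?thesis i" by (simp add: M_def)
  qed
  have "measure_pmf.expectation (aug_step a) Lin = (\<Sum>i<n. Pw w i * (Lin a + dot d (A i) x - M))"
    using E_step[OF I] inner by (simp add: w_def x_def)
  also have "\<dots> = (\<Sum>i<n. (Lin a - M) * Pw w i + Pw w i * dot d (A i) x)"
    by (intro sum.cong refl) (simp add: algebra_simps)
  also have "\<dots> = (Lin a - M) * (\<Sum>i<n. Pw w i) + (\<Sum>i<n. Pw w i * dot d (A i) x)"
    by (simp add: sum.distrib sum_distrib_left)
  also have "\<dots> = Lin a - M + (\<Sum>i<n. Pw w i * dot d (A i) x)" using P1 by simp
  also have "\<dots> \<le> Lin a + 2 * \<eta>"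
  proof -
    have a1: "(\<Sum>k<n. Pw w k * dot d (A k) x) - (\<Sum>k<n. Pw w k * Ev k) \<le> \<eta>"
    proof -
      have "(\<Sum>k<n. Pw w k * dot d (A k) x) - (\<Sum>k<n. Pw w k * Ev k) = (\<Sum>k<n. Pw w k * (dot d (A k) x - Ev k))"
        by (simp add: sum_subtractf right_diff_distrib)
      also have "\<dots> \<le> (\<Sum>k<n. Pw w k * \<eta>)"
        using v_stats[OF _ xn] Pn by (intro sum_mono mult_left_mono) (auto simp: Ev_def abs_le_iff)
      also have "\<dots> = \<eta>" using P1 by (simp add: sum_distrib_right[symmetric])
      finally show ?thesis .
    qed
    have a2: "(\<Sum>k<n. Pw w k * Ev2 k) \<le> 1"
    proof -
      have "(\<Sum>k<n. Pw w k * Ev2 k) \<le> (\<Sum>k<n. Pw w k * 1)"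
        using v_stats[OF _ xn] Pn by (intro sum_mono mult_left_mono) (auto simp: Ev2_def)
      thus ?thesis using P1 by simp
    qed
    have "\<eta> * (\<Sum>k<n. Pw w k * Ev2 k) \<le> \<eta>" using a2 eta_pos by (simp add: mult_le_cancel_left1)
    thus ?thesis using a1 unfolding M_def by simp
  qed
  finally show ?thesis .
qed

definition "lam = \<eta> / 2"
definition "Ypot a = (\<Sum>k<n. exp (lam * (aV a k - dot d (A k) (aX a))))"
definition "qY = 1 + lam * \<eta> + 4 * lam^2"

lemma exp_step_bound:
  assumes k: "k < n" and xn: "vnorm d x \<le> 1" and e1: "\<eta> \<le> 1"
  shows "measure_pmf.expectation (jdist x) (\<lambda>j. exp (lam * (vt x j k - dot d (A k) x))) \<le> qY"
proof -
  define c where "c = dot d (A k) x"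
  have cb: "\<bar>c\<bar> \<le> 1"
  proof -
    have "\<bar>c\<bar> \<le> vnorm d (A k) * vnorm d x" unfolding c_def by (rule dot_abs_le)
    also have "\<dots> \<le> 1 * 1" using rows[OF k] xn by (intro mult_mono) auto
    finally show ?thesis by simp
  qed
  have lp: "lam > 0" using eta_pos by (simp add: lam_def)
  note vs = v_stats[OF k xn]
  have zle: "\<And>j. lam * (vt x j k - c) \<le> 1"
  proof -
    fix j
    have "lam * vt x j k \<le> lam * (1/\<eta>)" using vt_abs[of x j k] lp by (intro mult_left_mono) auto
    also have "\<dots> = 1/2" using eta_pos by (simp add: lam_def)
    finally have 1: "lam * vt x j k \<le> 1/2" .
    have "lam * (-1) \<le> lam * c" using cb lp by (intro mult_left_mono) auto
    hence "- (lam * c) \<le> lam * 1" by linarith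
    also have "\<dots> \<le> 1/2" using e1 by (simp add: lam_def)
    finally show "lam * (vt x j k - c) \<le> 1" using 1 by (simp add: right_diff_distrib)
  qed
  have "measure_pmf.expectation (jdist x) (\<lambda>j. exp (lam * (vt x j k - c)))
     \<le> measure_pmf.expectation (jdist x) (\<lambda>j. 1 + lam * (vt x j k - c) + (lam * (vt x j k - c))^2)"
    by (rule E_mono[OF jdist_fin]) (rule exp_le_quad[OF zle])
  also have "\<dots> \<le> measure_pmf.expectation (jdist x) (\<lambda>j. (1 - lam * c + 2 * lam^2 * c^2) + lam * vt x j k + 2 * lam^2 * (vt x j k)^2)"
  proof (rule E_mono[OF jdist_fin])
    fix j
    have "(lam * (vt x j k - c))^2 \<le> 2 * lam^2 * c^2 + 2 * lam^2 * (vt x j k)^2"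
    proof -
      have "0 \<le> (lam * (vt x j k + c))^2" by simp
      thus ?thesis by (simp add: power2_eq_square algebra_simps)
    qed
    thus "1 + lam * (vt x j k - c) + (lam * (vt x j k - c))^2 \<le> (1 - lam * c + 2 * lam^2 * c^2) + lam * vt x j k + 2 * lam^2 * (vt x j k)^2"
      by (simp add: algebra_simps)
  qed
  also have "\<dots> = (1 - lam * c + 2 * lam^2 * c^2) + lam * measure_pmf.expectation (jdist x) (\<lambda>j. vt x j k)
      + 2 * lam^2 * measure_pmf.expectation (jdist x) (\<lambda>j. (vt x j k)^2)"
    by (simp add: E_add[OF jdist_fin] E_cmult[OF jdist_fin])
  also have "\<dots> \<le> (1 - lam * c + 2 * lam^2 * 1) + lam * (c + \<eta>) + 2 * lam^2 * 1"
  proof -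
    have "measure_pmf.expectation (jdist x) (\<lambda>j. vt x j k) \<le> c + \<eta>" using vs unfolding c_def by linarith
    hence 1: "lam * measure_pmf.expectation (jdist x) (\<lambda>j. vt x j k) \<le> lam * (c + \<eta>)" using lp by simp
    have 2: "2 * lam^2 * measure_pmf.expectation (jdist x) (\<lambda>j. (vt x j k)^2) \<le> 2 * lam^2 * 1"
      using vs by (intro mult_left_mono) auto
    have "\<bar>c\<bar>^2 \<le> 1" using cb by (intro power_le_one) auto
    hence 3: "c^2 \<le> 1" by simp
    hence "2 * lam^2 * c^2 \<le> 2 * lam^2 * 1" by (intro mult_left_mono) auto
    thus ?thesis using 1 2 by linarith
  qed
  also have "\<dots> = qY" by (simp add: qY_def algebra_simps)
  finally show ?thesis by (simp add: c_def)
qed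

lemma Y_step: assumes I: "Inv t a" and e1: "\<eta> \<le> 1"
  shows "measure_pmf.expectation (aug_step a) Ypot \<le> qY * Ypot a"
proof -
  define w where "w = aw a"
  define x where "x = Xv d (ay a)"
  have wpos: "\<And>k. w k > 0" using I by (simp add: Inv_def w_def)
  have xn: "vnorm d x \<le> 1" unfolding x_def by (rule vnorm_Xv)
  have P1: "(\<Sum>k<n. Pw w k) = 1" using Pw_sum wpos by blast
  have Pn: "\<And>k. 0 \<le> Pw w k" using Pw_nonneg wpos by blast
  define Yk where "Yk k = exp (lam * (aV a k - dot d (A k) (aX a)))" for k
  have inner: "\<And>i. measure_pmf.expectation (jdist x) (\<lambda>j. Ypot (upd a i j)) \<le> qY * Ypot a"
  proof -
    fix i
    have "(\<lambda>j. Ypot (upd a i j)) = (\<lambda>j. \<Sum>k<n. Yk k * exp (lam * (vt x j k - dot d (A k) x)))"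
      by (simp add: fun_eq_iff Ypot_def upd_def Let_def x_def Yk_def dot_def sum.distrib
          algebra_simps mult_exp_exp)
    hence "measure_pmf.expectation (jdist x) (\<lambda>j. Ypot (upd a i j))
      = (\<Sum>k<n. Yk k * measure_pmf.expectation (jdist x) (\<lambda>j. exp (lam * (vt x j k - dot d (A k) x))))"
      by (simp add: E_sum[OF jdist_fin] E_cmult[OF jdist_fin])
    also have "\<dots> \<le> (\<Sum>k<n. Yk k * qY)"
      using exp_step_bound[OF _ xn e1] by (intro sum_mono mult_left_mono) (auto simp: Yk_def)
    also have "\<dots> = qY * Ypot a" by (simp add: Ypot_def Yk_def sum_distrib_left mult.commute)
    finally show "?thesis i" .
  qed
  have "measure_pmf.expectation (aug_step a) Ypot \<le> (\<Sum>i<n. Pw w i * (qY * Ypot a))"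
    unfolding E_step[OF I] w_def[symmetric] x_def[symmetric]
    using inner Pn by (intro sum_mono mult_left_mono) auto
  also have "\<dots> = qY * Ypot a" using P1 by (simp add: sum_distrib_right[symmetric])
  finally show ?thesis .
qed

end


lemma count_sum:
  fixes "is" :: "nat list" and n :: nat and f :: "nat \<Rightarrow> real"
  shows "set is \<subseteq> {..<n} \<Longrightarrow> (\<Sum>i<n. real (count_list is i) * f i) = sum_list (map f is)"
proof (induction "is")
  case Nil thus ?case by simp
next
  case (Cons a xs)
  have "(\<Sum>i<n. real (count_list (a # xs) i) * f i) = (\<Sum>i<n. (if a = i then f i else 0) + real (count_list xs i) * f i)"
    by (intro sum.cong refl) (auto simp: algebra_simps)
  also have "\<dots> = (\<Sum>i<n. (if a = i then f i else 0)) + sum_list (map f xs)" using Cons by (simp add: sum.distrib)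
  also have "(\<Sum>i<n. (if a = i then f i else 0)) = f a"
  proof -
    have "a < n" using Cons.prems by simp
    thus ?thesis by (subst sum.delta') auto
  qed
  finally show ?case by simp
qed

lemma sum_dot: "sum_list (map (\<lambda>i. dot d (A i) x) is) = dot d (\<lambda>k. sum_list (map (\<lambda>i. A i k) is)) x"
  by (induction "is") (auto simp: dot_def sum.distrib algebra_simps)

lemma vnorm0: "vnorm d (\<lambda>_. 0) \<le> 1" by (simp add: vnorm_def)

context SP begin

definition "Gv is = (\<lambda>k. sum_list (map (\<lambda>i. A i k) is))"

lemma sig_set_bdd: "bdd_above {Min ((\<lambda>i. \<Sum>j<d. A i j * x j) ` {..<n}) | x. vnorm d x \<le> 1}"
proof (rule bdd_aboveI, safe)
  fix x assume x: "vnorm d x \<le> 1"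
  have "0 < n" using n2 by simp
  hence "Min ((\<lambda>i. \<Sum>j<d. A i j * x j) ` {..<n}) \<le> (\<Sum>j<d. A 0 j * x j)" by (intro Min_le) auto
  also have "\<dots> = dot d (A 0) x" by (simp add: dot_def)
  also have "\<dots> \<le> vnorm d (A 0) * vnorm d x" by (rule dot_le)
  also have "\<dots> \<le> 1 * 1" using rows[OF \<open>0 < n\<close>] x by (intro mult_mono) auto
  finally show "Min ((\<lambda>i. \<Sum>j<d. A i j * x j) ` {..<n}) \<le> 1" by simp
qed

lemma sigma_ge: assumes x: "vnorm d x \<le> 1"
  shows "Min ((\<lambda>i. dot d (A i) x) ` {..<n}) \<le> sigma n d A"
  unfolding sigma_def
  by (rule cSup_upper[OF _ sig_set_bdd]) (use x in \<open>auto simp: dot_def\<close>)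

lemma sigma_nonneg: "0 \<le> sigma n d A"
proof -
  have "vnorm d (\<lambda>_. 0) \<le> 1" by (simp add: vnorm_def)
  from sigma_ge[OF this] have "Min ((\<lambda>i. dot d (A i) (\<lambda>_. 0)) ` {..<n}) \<le> sigma n d A" .
  moreover have "(\<lambda>i. dot d (A i) (\<lambda>_. 0)) ` {..<n} = {0}" using n_ne by (auto simp: dot_def)
  ultimately show ?thesis by simp
qed

lemma dual_le:
  assumes s: "set is \<subseteq> {..<n}" and l: "length is = T"
  shows "dual_val n d A (pbar T is) \<le> vnorm d (Gv is) / T"
  unfolding dual_val_def
proof (rule cSup_least)
  show "{\<Sum>i<n. pbar T is i * (\<Sum>j<d. A i j * x j) |x. vnorm d x \<le> 1} \<noteq> {}"
    using vnorm0 by blast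
next
  fix z assume "z \<in> {\<Sum>i<n. pbar T is i * (\<Sum>j<d. A i j * x j) |x. vnorm d x \<le> 1}"
  then obtain x where x: "vnorm d x \<le> 1" and z: "z = (\<Sum>i<n. pbar T is i * (\<Sum>j<d. A i j * x j))" by auto
  have e1: "(\<Sum>i<n. real (count_list is i) * dot d (A i) x) = sum_list (map (\<lambda>i. dot d (A i) x) is)"
    by (rule count_sum[OF s])
  have e2: "sum_list (map (\<lambda>i. dot d (A i) x) is) = dot d (Gv is) x" unfolding Gv_def by (rule sum_dot)
  have "z = (\<Sum>i<n. real (count_list is i) * dot d (A i) x) / T"
    unfolding z pbar_def by (simp add: dot_def sum_divide_distrib)
  also have "\<dots> = dot d (Gv is) x / T" using e1 e2 by simp
  also have "\<dots> \<le> vnorm d (Gv is) / T"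
  proof -
    have "dot d (Gv is) x \<le> vnorm d (Gv is) * vnorm d x" by (rule dot_le)
    also have "\<dots> \<le> vnorm d (Gv is)" using x by (simp add: mult_left_le)
    finally show ?thesis using T_pos by (simp add: divide_right_mono)
  qed
  finally show "z \<le> vnorm d (Gv is) / T" .
qed

lemma sigma_le:
  assumes s: "set is \<subseteq> {..<n}" and l: "length is = T"
  shows "T * sigma n d A \<le> vnorm d (Gv is)"
proof -
  have "sigma n d A \<le> vnorm d (Gv is) / T"
    unfolding sigma_def
  proof (rule cSup_least)
    show "{Min ((\<lambda>i. \<Sum>j<d. A i j * x j) ` {..<n}) | x. vnorm d x \<le> 1} \<noteq> {}"
      using vnorm0 by blast
  next
    fix z assume "z \<in> {Min ((\<lambda>i. \<Sum>j<d. A i j * x j) ` {..<n}) | x. vnorm d x \<le> 1}"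
    then obtain x where x: "vnorm d x \<le> 1" and z: "z = Min ((\<lambda>i. dot d (A i) x) ` {..<n})"
      by (auto simp: dot_def)
    have "real T * z = sum_list (map (\<lambda>i. z) is)" using l by (simp add: sum_list_triv)
    also have "\<dots> \<le> sum_list (map (\<lambda>i. dot d (A i) x) is)"
      by (rule sum_list_mono) (use s in \<open>auto simp: z intro!: Min_le\<close>)
    also have "\<dots> = dot d (Gv is) x" by (simp add: sum_dot Gv_def)
    also have "\<dots> \<le> vnorm d (Gv is) * vnorm d x" by (rule dot_le)
    also have "\<dots> \<le> vnorm d (Gv is)" using x by (simp add: mult_left_le)
    finally show "z \<le> vnorm d (Gv is) / T" using T_pos by (simp add: field_simps)
  qed
  thus ?thesis using T_pos by (simp add: field_simps)
qed

end


context SP begin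

definition "Y0 = real n * qY ^ T"
definition "K = (ln Y0 - 1) / lam + ln (real n) / \<eta> + T * hy / 2 + 1 / (2 * hy)"
definition "Psi a = Lin a + Ypot a / (lam * Y0) + K"
definition "Zf a = vnorm d (Gv (ais a)) - T * sigma n d A"

lemma lam_pos: "lam > 0" using eta_pos by (simp add: lam_def)
lemma qY_pos: "qY > 0" using lam_pos eta_pos by (simp add: qY_def add_pos_nonneg)
lemma Y0_pos: "Y0 > 0" using qY_pos n2 by (simp add: Y0_def)

lemma path_bound:
  assumes I: "Inv T a"
  shows "Zf a \<le> Psi a"
proof -
  define G where "G = Gv (ais a)"
  have ayG: "ay a = (\<lambda>k. hy * G k)" using I by (simp add: Inv_def G_def Gv_def)
  have wpos: "\<And>k. aw a k > 0" using I by (simp add: Inv_def)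
  have ra: "vnorm d G \<le> aR a + T * hy / 2 + 1 / (2 * hy)"
  proof -
    have "vnorm d (ay a) = hy * vnorm d G" using hy_pos by (simp add: ayG vnorm_scale)
    moreover have "vnorm d (ay a) - 1/2 \<le> phi d (ay a)" by (rule phi_ge)
    moreover have "phi d (ay a) \<le> hy * aR a + T * hy^2 / 2" using I unfolding Inv_def by blast
    ultimately have "hy * vnorm d G \<le> hy * aR a + T * hy^2 / 2 + 1/2" by linarith
    hence "hy * vnorm d G \<le> hy * (aR a + T * hy / 2 + 1 / (2 * hy))"
      using hy_pos by (simp add: algebra_simps power2_eq_square)
    thus ?thesis using hy_pos by simp
  qed
  define xb where "xb = (\<lambda>j. aX a j / T)"
  have xbn: "vnorm d xb \<le> 1"
  proof -
    have "vnorm d xb = vnorm d (aX a) / T" using T_pos by (simp add: xb_def vnorm_div)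
    also have "\<dots> \<le> 1" using I T_pos by (simp add: Inv_def divide_le_eq)
    finally show ?thesis .
  qed
  have fin: "finite ((\<lambda>i. dot d (A i) xb) ` {..<n})" by simp
  have ne: "(\<lambda>i. dot d (A i) xb) ` {..<n} \<noteq> {}" using n_ne by simp
  obtain k where k: "k < n" and km: "dot d (A k) xb = Min ((\<lambda>i. dot d (A i) xb) ` {..<n})"
    using Min_in[OF fin ne] by auto
  have Uk: "dot d (A k) (aX a) \<le> T * sigma n d A"
  proof -
    have "dot d (A k) (aX a) = T * dot d (A k) xb" using T_pos
      by (simp add: dot_def xb_def sum_distrib_left)
    also have "\<dots> \<le> T * sigma n d A" using sigma_ge[OF xbn] km by (intro mult_left_mono) auto
    finally show ?thesis .
  qed
  have mw: "aS1 a \<le> aV a k + ln (real n) / \<eta> + \<eta> * aS2 a"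
  proof -
    have "exp (- \<eta> * aV a k) \<le> aw a k" using I k unfolding Inv_def by blast
    also have "aw a k \<le> Wt (aw a)" unfolding Wt_def using k wpos
      by (intro member_le_sum) (auto simp: less_imp_le)
    also have "\<dots> \<le> real n * exp (- \<eta> * aS1 a + \<eta>^2 * aS2 a)" using I unfolding Inv_def by blast
    finally have "exp (- \<eta> * aV a k) \<le> real n * exp (- \<eta> * aS1 a + \<eta>^2 * aS2 a)" .
    hence "ln (exp (- \<eta> * aV a k)) \<le> ln (real n * exp (- \<eta> * aS1 a + \<eta>^2 * aS2 a))"
      using n2 by (subst ln_le_cancel_iff) auto
    hence "- \<eta> * aV a k \<le> ln (real n) + (- \<eta> * aS1 a + \<eta>^2 * aS2 a)"
      using n2 by (simp add: ln_mult)
    hence "\<eta> * aS1 a \<le> \<eta> * (aV a k + ln (real n) / \<eta> + \<eta> * aS2 a)"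
      using eta_pos by (simp add: algebra_simps power2_eq_square)
    thus ?thesis using eta_pos by simp
  qed
  have yp: "aV a k - dot d (A k) (aX a) \<le> (Ypot a / Y0 - 1 + ln Y0) / lam"
  proof -
    have "exp (lam * (aV a k - dot d (A k) (aX a))) \<le> Ypot a"
      unfolding Ypot_def using k by (intro member_le_sum[where f = "\<lambda>k. exp (lam * (aV a k - dot d (A k) (aX a)))"]) auto
    hence "lam * (aV a k - dot d (A k) (aX a)) \<le> ln (Ypot a)"
      using ln_exp ln_le_cancel_iff exp_gt_zero by (metis (no_types) less_le_trans order_refl)
    also have "ln (Ypot a) = ln (Ypot a / Y0) + ln Y0"
    proof -
      have "Ypot a > 0" unfolding Ypot_def using n_ne by (intro sum_pos) auto
      thus ?thesis using Y0_pos by (simp add: ln_div)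
    qed
    also have "ln (Ypot a / Y0) \<le> Ypot a / Y0 - 1"
    proof -
      have "Ypot a > 0" unfolding Ypot_def using n_ne by (intro sum_pos) auto
      thus ?thesis using Y0_pos by (intro ln_le_minus_one) simp
    qed
    finally have "lam * (aV a k - dot d (A k) (aX a)) \<le> Ypot a / Y0 - 1 + ln Y0" by simp
    thus ?thesis using lam_pos by (simp add: field_simps)
  qed
  have "Zf a = vnorm d G - T * sigma n d A" by (simp add: Zf_def G_def)
  also have "\<dots> \<le> Psi a"
  proof -
    have "(Ypot a / Y0 - 1 + ln Y0) / lam = Ypot a / (lam * Y0) + (ln Y0 - 1) / lam"
      using lam_pos Y0_pos by (simp add: field_simps)
    thus ?thesis using ra mw yp Uk unfolding Psi_def K_def Lin_def by linarith
  qed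
  finally show ?thesis .
qed


lemma E_Psi: assumes e1: "\<eta> \<le> 1"
  shows "measure_pmf.expectation (aug_run T) Psi \<le> 2 * \<eta> * T + 1 / lam + K"
proof -
  have fr: "finite (set_pmf (aug_run T))" by (rule fin_run)
  have EL: "measure_pmf.expectation (aug_run T) Lin \<le> Lin init + T * (2 * \<eta>)"
    by (rule drift_add) (rule Lin_step)
  have EY: "measure_pmf.expectation (aug_run T) Ypot \<le> qY ^ T * Ypot init"
    by (rule drift_mul) (auto intro: Y_step e1 simp: qY_pos less_imp_le)
  have Yi: "Ypot init = n" by (simp add: Ypot_def dot_def)
  have Li: "Lin init = 0" by (simp add: Lin_def)
  have "measure_pmf.expectation (aug_run T) Psi
     = measure_pmf.expectation (aug_run T) Lin + (1 / (lam * Y0)) * measure_pmf.expectation (aug_run T) Ypot + K"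
  proof -
    have "Psi = (\<lambda>a. (Lin a + (1 / (lam * Y0)) * Ypot a) + K)" by (simp add: fun_eq_iff Psi_def)
    thus ?thesis by (simp add: E_add[OF fr] E_cmult[OF fr])
  qed
  also have "\<dots> \<le> 2 * \<eta> * T + (1 / (lam * Y0)) * Y0 + K"
  proof -
    have "(1 / (lam * Y0)) * measure_pmf.expectation (aug_run T) Ypot \<le> (1 / (lam * Y0)) * Y0"
      using EY Yi lam_pos Y0_pos by (intro mult_left_mono) (auto simp: Y0_def mult.commute)
    moreover have "measure_pmf.expectation (aug_run T) Lin \<le> 2 * \<eta> * T" using EL Li by (simp add: algebra_simps)
    ultimately show ?thesis by linarith
  qed
  also have "(1 / (lam * Y0)) * Y0 = 1 / lam" using Y0_pos by simp
  finally show ?thesis .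
qed

lemma ln2_half: "1/2 \<le> ln (2::real)"
proof -
  have "exp (1/2::real) \<le> 1 + 1/2 + (1/2)^2" by (rule exp_bound) auto
  also have "\<dots> \<le> 2" by (simp add: power2_eq_square)
  finally have "exp (1/2::real) \<le> 2" .
  hence "ln (exp (1/2::real)) \<le> ln 2" by (subst ln_le_cancel_iff) auto
  thus ?thesis by simp
qed

lemma B_bound: assumes e1: "\<epsilon> \<le> 1" shows "2 * \<eta> * T + 1 / lam + K \<le> 2 * \<epsilon> * T"
proof -
  define L where "L = ln (real n)"
  define q where "q = sqrt (L / T)"
  have Lp: "L > 0" using ln_n_pos by (simp add: L_def)
  have Tp: "real T > 0" using T_pos by simp
  have qp: "q > 0" using Lp Tp by (simp add: q_def)
  have eta_q: "\<eta> = q / 100" by (simp add: \<eta>_def sp_eta_def T_def[symmetric] q_def L_def)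
  have Lq: "L = q^2 * T" using Lp Tp by (simp add: q_def)
  have Tb: "40000 * L \<le> \<epsilon>^2 * T"
    using T_ge epos by (simp add: L_def field_simps)
  have q_le: "q \<le> \<epsilon> / 200"
  proof -
    have "L / T \<le> (\<epsilon> / 200)^2" using Tb Tp by (simp add: field_simps power2_eq_square)
    thus ?thesis unfolding q_def using epos by (intro real_le_lsqrt) auto
  qed
  have L_half: "1/2 \<le> L"
  proof -
    have "ln (2::real) \<le> ln (real n)" using n2 by simp
    thus ?thesis using ln2_half by (simp add: L_def)
  qed
  have eT: "8 \<le> \<epsilon>^2 * T" using Tb L_half by linarith
  have lnY0: "ln Y0 \<le> L + T * (lam * \<eta> + 4 * lam^2)"
  proof -
    have "ln Y0 = L + T * ln qY" using n2 qY_pos by (simp add: Y0_def L_def ln_mult ln_realpow)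
    moreover have "ln qY \<le> lam * \<eta> + 4 * lam^2" using ln_le_minus_one[OF qY_pos] by (simp add: qY_def)
    ultimately show ?thesis using Tp by (simp add: mult_left_mono)
  qed
  have K1: "(ln Y0 - 1) / lam + 1 / lam \<le> 2 * L / \<eta> + 3 * \<eta> * T"
  proof -
    have "(ln Y0 - 1) / lam + 1 / lam = ln Y0 / lam" using lam_pos by (simp add: field_simps)
    also have "\<dots> \<le> (L + T * (lam * \<eta> + 4 * lam^2)) / lam" using lnY0 lam_pos by (simp add: divide_right_mono)
    also have "\<dots> = 2 * L / \<eta> + 3 * \<eta> * T" using eta_pos by (simp add: lam_def field_simps power2_eq_square)
    finally show ?thesis .
  qed
  have Leta: "L / \<eta> = 100 * q * T" using qp by (simp add: eta_q Lq field_simps power2_eq_square)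
  define s where "s = sqrt (2 * T)"
  have sp: "s > 0" using Tp by (simp add: s_def)
  have s2: "s^2 = 2 * T" using Tp by (simp add: s_def)
  have hys: "hy = 1 / s" by (simp add: hy_def s_def)
  have H: "T * hy / 2 + 1 / (2 * hy) = 3 * s / 4"
  proof -
    have "T = s^2 / 2" using s2 by simp
    thus ?thesis using sp by (simp add: hys field_simps power2_eq_square)
  qed
  have s_le: "s \<le> \<epsilon> * T / 2"
  proof -
    have "2 * T \<le> (\<epsilon> * T / 2)^2"
    proof -
      have "(\<epsilon> * T / 2)^2 = (\<epsilon>^2 * T) * T / 4" by (simp add: power2_eq_square)
      also have "\<dots> \<ge> 8 * T / 4" using eT Tp by (intro divide_right_mono mult_right_mono) auto
      finally show ?thesis by simp
    qed
    thus ?thesis unfolding s_def using epos Tp by (intro real_le_lsqrt) auto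
  qed
  have "2 * \<eta> * T + 1 / lam + K = 2 * \<eta> * T + ((ln Y0 - 1) / lam + 1 / lam) + L / \<eta> + (T * hy / 2 + 1 / (2 * hy))"
    by (simp add: K_def L_def algebra_simps)
  also have "\<dots> \<le> 2 * \<eta> * T + (2 * L / \<eta> + 3 * \<eta> * T) + L / \<eta> + 3 * s / 4"
    using K1 H by linarith
  also have "\<dots> = 5 * q * T / 100 + 300 * q * T + 3 * s / 4"
  proof -
    have e: "\<eta> * T = q * T / 100" by (simp add: eta_q)
    have f: "2 * L / \<eta> = 2 * (L / \<eta>)" by simp
    have g: "2 * \<eta> * T = 2 * (\<eta> * T)" "3 * \<eta> * T = 3 * (\<eta> * T)" by simp_all
    have h: "5 * q * T / 100 = 5 * (q * T / 100)" "300 * q * T = 3 * (100 * q * T)" by simp_all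
    show ?thesis using e f g h Leta by linarith
  qed
  also have "\<dots> \<le> 5 * (\<epsilon> / 200) * T / 100 + 300 * (\<epsilon> / 200) * T + 3 * (\<epsilon> * T / 2) / 4"
  proof -
    have a: "q * T \<le> (\<epsilon> / 200) * T" using q_le Tp by (intro mult_right_mono) auto
    have b1: "5 * (q * T) / 100 \<le> 5 * ((\<epsilon>/200) * T) / 100" using a by simp
    have b2: "300 * (q * T) \<le> 300 * ((\<epsilon>/200) * T)" using a by simp
    have b3: "3 * s / 4 \<le> 3 * (\<epsilon> * T / 2) / 4" using s_le by simp
    show ?thesis by (simp only: mult.assoc) (use b1 b2 b3 in linarith)
  qed
  also have "\<dots> = (5 / 20000 + 3 / 2 + 3 / 8) * (\<epsilon> * T)" by (simp add: algebra_simps)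
  also have "\<dots> \<le> 2 * (\<epsilon> * T)" using epos Tp by (intro mult_right_mono) auto
  finally show ?thesis by (simp add: mult.assoc)
qed

end


context SP begin

definition "Ev = {(s, is). dual_val n d A (pbar T is) \<le> sigma n d A + 4 * \<epsilon>}"

lemma Gv_norm:
  assumes I: "Inv T a" shows "hy * vnorm d (Gv (ais a)) = vnorm d (ay a)"
proof -
  have "ay a = (\<lambda>k. hy * Gv (ais a) k)" using I by (simp add: Inv_def Gv_def)
  thus ?thesis using hy_pos by (simp add: vnorm_scale)
qed

lemma Zf_nonneg: "Inv T a \<Longrightarrow> 0 \<le> Zf a"
  unfolding Zf_def using sigma_le by (simp add: Inv_def)

lemma good_event:
  assumes I: "Inv T a" and Zc: "Zf a < 4 * \<epsilon> * T"
  shows "proj a \<in> Ev"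
proof -
  have "dual_val n d A (pbar T (ais a)) \<le> vnorm d (Gv (ais a)) / T"
    using I by (intro dual_le) (auto simp: Inv_def)
  also have "\<dots> \<le> sigma n d A + 4 * \<epsilon>"
  proof -
    have "vnorm d (Gv (ais a)) \<le> T * (sigma n d A + 4 * \<epsilon>)" using Zc unfolding Zf_def by (simp add: algebra_simps)
    thus ?thesis using T_pos by (simp add: divide_le_eq mult.commute)
  qed
  finally show ?thesis by (simp add: Ev_def proj_def)
qed

lemma eta_le1: assumes "\<epsilon> \<le> 1" shows "\<eta> \<le> 1"
proof -
  have Tp: "real T > 0" using T_pos by simp
  have "200^2 / \<epsilon>^2 * ln (real n) \<le> T" by (rule T_ge)
  hence "200^2 * ln (real n) \<le> \<epsilon>^2 * T" using epos by (simp add: field_simps)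
  also have "\<dots> \<le> 1 * real T"
  proof -
    have "\<epsilon>^2 \<le> 1" using assms epos by (simp add: power_le_one)
    thus ?thesis using Tp by (intro mult_right_mono) auto
  qed
  finally have "ln (real n) / T \<le> 1" using Tp ln_n_pos by (simp add: divide_le_eq)
  hence "sqrt (ln (real n) / T) \<le> 1" by simp
  thus ?thesis unfolding \<eta>_def sp_eta_def T_def[symmetric] by linarith
qed

lemma prob_proj: "measure_pmf.prob (sp_run n d A \<epsilon> T) Ev = measure_pmf.prob (aug_run T) (proj -` Ev)"
  by (simp add: run_proj[symmetric])

lemma main_small: assumes e1: "\<epsilon> \<le> 1"
  shows "measure_pmf.prob (sp_run n d A \<epsilon> T) Ev \<ge> 1/2"
proof -
  define p where "p = aug_run T"
  have fp: "finite (set_pmf p)" unfolding p_def by (rule fin_run)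
  have Tp: "real T > 0" using T_pos by simp
  define c where "c = 4 * \<epsilon> * T"
  have cp: "c > 0" using epos Tp by (simp add: c_def)
  have EZ: "measure_pmf.expectation p Zf \<le> 2 * \<epsilon> * T"
  proof -
    have "measure_pmf.expectation p Zf \<le> measure_pmf.expectation p Psi"
      by (rule E_mono[OF fp]) (auto simp: p_def intro: path_bound Inv_run)
    also have "\<dots> \<le> 2 * \<eta> * T + 1 / lam + K" unfolding p_def by (rule E_Psi[OF eta_le1[OF e1]])
    also have "\<dots> \<le> 2 * \<epsilon> * T" by (rule B_bound[OF e1])
    finally show ?thesis .
  qed
  define Bad where "Bad = {x \<in> space (measure_pmf p). c \<le> Zf x}"
  have mB: "measure_pmf.prob p Bad \<le> measure_pmf.expectation p Zf / c"
    unfolding Bad_def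
  proof (rule integral_Markov_inequality_measure[OF _ _ _ cp])
    show "integrable (measure_pmf p) Zf" by (rule integrable_measure_pmf_finite[OF fp])
    show "space (measure_pmf p) \<in> sets (measure_pmf p)" by simp
    show "AE x in measure_pmf p. 0 \<le> Zf x"
      unfolding AE_measure_pmf_iff p_def by (auto intro: Zf_nonneg Inv_run)
  qed
  also have "\<dots> \<le> (2 * \<epsilon> * T) / c" using EZ cp by (simp add: divide_right_mono)
  also have "\<dots> = 1/2" using epos Tp by (simp add: c_def)
  finally have mB2: "measure_pmf.prob p Bad \<le> 1/2" .
  have "1 - measure_pmf.prob p Bad = measure_pmf.prob p (space (measure_pmf p) - Bad)"
    by (rule measure_pmf.prob_compl[symmetric]) simp
  also have "\<dots> = measure_pmf.prob p ((space (measure_pmf p) - Bad) \<inter> set_pmf p)"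
    by (rule measure_Int_set_pmf[symmetric])
  also have "\<dots> \<le> measure_pmf.prob p (proj -` Ev)"
  proof (rule measure_pmf.finite_measure_mono)
    show "(space (measure_pmf p) - Bad) \<inter> set_pmf p \<subseteq> proj -` Ev"
    proof
      fix a assume "a \<in> (space (measure_pmf p) - Bad) \<inter> set_pmf p"
      hence "Zf a < c" "a \<in> set_pmf p" by (auto simp: Bad_def)
      thus "a \<in> proj -` Ev" using good_event Inv_run unfolding p_def c_def by auto
    qed
  qed simp
  finally have "1/2 \<le> measure_pmf.prob p (proj -` Ev)" using mB2 by linarith
  thus ?thesis by (simp add: prob_proj p_def)
qed

lemma main_big: assumes e1: "\<epsilon> > 1"
  shows "measure_pmf.prob (sp_run n d A \<epsilon> T) Ev \<ge> 1/2"
proof -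
  define p where "p = aug_run T"
  have all: "set_pmf p \<subseteq> proj -` Ev"
  proof
    fix a assume "a \<in> set_pmf p"
    hence I: "Inv T a" unfolding p_def by (rule Inv_run)
    have "dual_val n d A (pbar T (ais a)) \<le> vnorm d (Gv (ais a)) / T"
      using I by (intro dual_le) (auto simp: Inv_def)
    also have "\<dots> \<le> 1"
    proof -
      have "vnorm d (ay a) \<le> T * hy" using I unfolding Inv_def by blast
      hence "hy * vnorm d (Gv (ais a)) \<le> hy * T" using Gv_norm[OF I] by (simp add: mult.commute)
      hence "vnorm d (Gv (ais a)) \<le> T" using hy_pos by simp
      thus ?thesis using T_pos by (simp add: divide_le_eq)
    qed
    also have "\<dots> \<le> sigma n d A + 4 * \<epsilon>" using sigma_nonneg e1 by simp
    finally show "a \<in> proj -` Ev" by (simp add: Ev_def proj_def)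
  qed
  have "measure_pmf.prob p (space (measure_pmf p) - proj -` Ev) = 0"
    using all by (subst measure_pmf_zero_iff) auto
  moreover have "measure_pmf.prob p (space (measure_pmf p) - proj -` Ev) = 1 - measure_pmf.prob p (proj -` Ev)"
    by (rule measure_pmf.prob_compl) simp
  ultimately have "measure_pmf.prob p (proj -` Ev) = 1" by simp
  thus ?thesis by (simp add: prob_proj p_def)
qed

lemma main: "measure_pmf.prob (sp_run n d A \<epsilon> (sp_T n \<epsilon>))
   {(s, is). dual_val n d A (pbar (sp_T n \<epsilon>) is) \<le> sigma n d A + 4 * \<epsilon>} \<ge> 1/2"
proof -
  have "measure_pmf.prob (sp_run n d A \<epsilon> T) Ev \<ge> 1/2"
    using main_small main_big by force
  thus ?thesis by (simp add: Ev_def T_def)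
qed

end

theorem mainTheorem4:
  shows "\<exists>C::real. \<forall>(n::nat) (d::nat) (A::nat \<Rightarrow> nat \<Rightarrow> real) (\<epsilon>::real).
           n \<ge> 2 \<longrightarrow> \<epsilon> > 0 \<longrightarrow> (\<forall>i<n. vnorm d (A i) \<le> 1) \<longrightarrow>
           measure_pmf.prob (sp_run n d A \<epsilon> (sp_T n \<epsilon>))
             {(s, is). dual_val n d A (pbar (sp_T n \<epsilon>) is) \<le> sigma n d A + C * \<epsilon>}
           \<ge> 1/2"
proof (intro exI[of _ 4] allI impI)
  fix n d :: nat and A :: "nat \<Rightarrow> nat \<Rightarrow> real" and \<epsilon> :: real
  assume "n \<ge> 2" "\<epsilon> > 0" "\<forall>i<n. vnorm d (A i) \<le> 1"
  then interpret SP n d A \<epsilon> by unfold_locales auto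
  show "measure_pmf.prob (sp_run n d A \<epsilon> (sp_T n \<epsilon>))
      {(s, is). dual_val n d A (pbar (sp_T n \<epsilon>) is) \<le> sigma n d A + 4 * \<epsilon>} \<ge> 1/2"
    by (rule main)
qed


end
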